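(* Define \[ \Lambda_n(p_1,p_2,p_3)=\frac12\,\frac1{(n+1)!}\sum_{m=1}^{n+1}S_{n+1}^{(m)}\Bigl(\frac{2-\phi}4\Bigr)^m\sum_{k=0}^m\binom mk\Bigl(\frac1{P(2-\phi)}\Bigr)^kL(-2k,\chi_{2P}^{(1,1,1)}),\qquad \phi=\phi(p_1,p_2,p_3). \] Then the coefficients $\lambda_n$ of $\tau_\infty(\Sigma(p_1,p_2,p_3))=\sum_{n\ge0}\lambda_n(q-1)^n$ are $\lambda_n(\Sigma(p_1,p_2,p_3))=\Lambda_n(p_1,p_2,p_3)$ when $\frac1{p_1}+\frac1{p_2}+\frac1{p_3}<1$, and $\lambda_n(\Sigma(2,3,5))=\Lambda_n(2,3,5)+(-1)^{n+1}$.
   Context: $p_1,p_2,p_3$ pairwise coprime positive integers, $P=p_1p_2p_3$, $\phi=3-\frac1P+12(s(p_2p_3,p_1)+s(p_1p_3,p_2)+s(p_1p_2,p_3))$ with Dedekind sums $s(b,a)=\sum_{k=1}^{a-1}((k/a))((kb/a))$ ($((x))=x-\lfloor x\rfloor-\frac12$ for $x\notin\mathbb Z$, $0$ otherwise). $\chi_{2P}^{(1,1,1)}$: odd $2P$-periodic, $\chi(n)=1$ if $n\equiv P(1+\sum_j\varepsilon_j/p_j)\pmod{2P}$ with signs $\varepsilon_1\varepsilon_2\varepsilon_3=-1$, $-1$ if with product $1$, $0$ otherwise; $L(-2k,\chi)=-\frac{(2P)^{2k}}{2k+1}\sum_{j=1}^{2P}\chi(j)B_{2k+1}(\frac j{2P})$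 with Bernoulli polynomials $B_n$. $S_n^{(m)}$ are Stirling numbers of the first kind: $\prod_{j=0}^{n-1}(x-j)=\sum_mS_n^{(m)}x^m$. The formal power series $\tau_\infty$ in $q-1$ (with $\log q=\log(1+(q-1))$, $q^a=\exp(a\log q)$) is defined by: for $\sum1/p_j<1$, $q^{\phi/4-1/2}(q-1)\tau_\infty(\Sigma(p_1,p_2,p_3))=\frac12\sum_{k\ge0}\frac{L(-2k,\chi_{2P}^{(1,1,1)})}{k!}\bigl(\frac{\log q}{4P}\bigr)^k$; for the Poincaré sphere ($P=30$), $q^{121/120}(q-1)\tau_\infty(\Sigma(2,3,5))=q^{1/120}+\frac12\sum_{k\ge0}\frac{L(-2k,\chi_{60}^{(1,1,1)})}{k!}\bigl(\frac{\log q}{120}\bigr)^k$, where $\chi_{60}^{(1,1,1)}(n)=-1$ for $n\equiv1,11,19,29$, $+1$ for $n\equiv31,41,49,59\pmod{60}$, $0$ otherwise, and $L(-2k,\chi_{60}^{(1,1,1)})$ is given by the same Bernoulli formula with $2P=60$. *)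

theory Defs
  imports "HOL-Computational_Algebra.Computational_Algebra"
begin

(* Bernoulli numbers, convention B_1 = -1/2:  sum_{k=0}^{n} C(n+1,k) B_k = 0 for n >= 1 *)
fun bernoulli_num :: "nat \<Rightarrow> real" where
  "bernoulli_num n = (if n = 0 then 1
     else - (\<Sum>k<n. of_nat ((n + 1) choose k) * bernoulli_num k) / of_nat (n + 1))"

definition bernoulli_poly :: "nat \<Rightarrow> real \<Rightarrow> real" where
  "bernoulli_poly n x = (\<Sum>k\<le>n. of_nat (n choose k) * bernoulli_num k * x ^ (n - k))"

definition sawtooth :: "real \<Rightarrow> real" where
  "sawtooth x = (if x \<in> \<int> then 0 else x - of_int \<lfloor>x\<rfloor> - 1/2)"

definition dedekind_sum :: "nat \<Rightarrow> nat \<Rightarrow> real" where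
  "dedekind_sum b a = (\<Sum>k=1..a-1. sawtooth (real k / real a) * sawtooth (real k * real b / real a))"

definition phi :: "nat \<Rightarrow> nat \<Rightarrow> nat \<Rightarrow> real" where
  "phi p1 p2 p3 = (let P = real (p1 * p2 * p3) in
     3 - 1 / P + 12 * (dedekind_sum (p2 * p3) p1 + dedekind_sum (p1 * p3) p2 + dedekind_sum (p1 * p2) p3))"

(* n = P(1 + e1/p1 + e2/p2 + e3/p3) mod 2P, with signs e_j in {1,-1} *)
definition chi_cond :: "nat \<Rightarrow> nat \<Rightarrow> nat \<Rightarrow> int \<Rightarrow> int \<Rightarrow> int \<Rightarrow> int \<Rightarrow> bool" where
  "chi_cond p1 p2 p3 e1 e2 e3 n \<longleftrightarrow> e1 \<in> {1, -1} \<and> e2 \<in> {1, -1} \<and> e3 \<in> {1, -1} \<and>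
     n mod int (2*p1*p2*p3) =
       (int (p1*p2*p3) + e1 * int (p2*p3) + e2 * int (p1*p3) + e3 * int (p1*p2)) mod int (2*p1*p2*p3)"

definition chi :: "nat \<Rightarrow> nat \<Rightarrow> nat \<Rightarrow> int \<Rightarrow> real" where
  "chi p1 p2 p3 n =
     (if \<exists>e1 e2 e3. chi_cond p1 p2 p3 e1 e2 e3 n \<and> e1 * e2 * e3 = -1 then 1
      else if \<exists>e1 e2 e3. chi_cond p1 p2 p3 e1 e2 e3 n \<and> e1 * e2 * e3 = 1 then -1
      else 0)"

(* L(-2k, chi_{2P}^{(1,1,1)}) *)
definition Lval :: "nat \<Rightarrow> nat \<Rightarrow> nat \<Rightarrow> nat \<Rightarrow> real" where
  "Lval p1 p2 p3 k = (let N = 2 * p1 * p2 * p3 in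
     - (real N ^ (2 * k) / real (2 * k + 1)) *
       (\<Sum>j=1..N. chi p1 p2 p3 (int j) * bernoulli_poly (2 * k + 1) (real j / real N)))"

definition stirling1 :: "nat \<Rightarrow> nat \<Rightarrow> real" where
  "stirling1 n m = coeff (\<Prod>j<n. [:- real j, 1:]) m"

(* The formal power series in X = q - 1:
   sum_{k>=0} L(-2k,chi)/k! * (log q / (4P))^k,  log q = log(1 + X).
   Since log q has zero constant term, the n-th coefficient only involves k <= n. *)
definition Lseries :: "nat \<Rightarrow> nat \<Rightarrow> nat \<Rightarrow> real fps" where
  "Lseries p1 p2 p3 = Abs_fps (\<lambda>n. \<Sum>k\<le>n.
     Lval p1 p2 p3 k / fact k * (1 / (4 * real (p1 * p2 * p3))) ^ k * ((fps_ln 1) ^ k $ n))"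

(* q^a = (1 + X)^a = fps_binomial a *)
definition tau_infty :: "nat \<Rightarrow> nat \<Rightarrow> nat \<Rightarrow> real fps" where
  "tau_infty p1 p2 p3 = (THE \<tau>.
     fps_binomial (phi p1 p2 p3 / 4 - 1/2) * fps_X * \<tau> = fps_const (1/2) * Lseries p1 p2 p3)"

definition tau_infty_poincare :: "real fps" where
  "tau_infty_poincare = (THE \<tau>.
     fps_binomial (121/120) * fps_X * \<tau> = fps_binomial (1/120) + fps_const (1/2) * Lseries 2 3 5)"

definition Lambda :: "nat \<Rightarrow> nat \<Rightarrow> nat \<Rightarrow> nat \<Rightarrow> real" where
  "Lambda n p1 p2 p3 = (let \<phi> = phi p1 p2 p3; P = real (p1 * p2 * p3) in
     1/2 * (1 / fact (n + 1)) *
     (\<Sum>m=1..n+1. stirling1 (n + 1) m * ((2 - \<phi>) / 4) ^ m *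
        (\<Sum>k=0..m. of_nat (m choose k) * (1 / (P * (2 - \<phi>))) ^ k * Lval p1 p2 p3 k)))"

end

theory Submission
  imports Defs
begin


abbreviation "LL \<equiv> (fps_ln (1::real))"

lemma ode_B: "(1 + fps_X) * fps_deriv (fps_binomial a) = fps_const (a::real) * fps_binomial a"
proof -
  have h: "(1 + fps_X :: real fps) $ 0 \<noteq> 0" by simp
  show ?thesis unfolding fps_binomial_deriv fps_divide_unit[OF h]
    unfolding mult.left_commute[of "1 + fps_X"] inverse_mult_eq_1'[OF h] by (rule mult_1_right)
qed

lemma ode_L: "(1 + fps_X) * fps_deriv LL = 1"
proof -
  have h: "(1 + fps_X :: real fps) $ 0 \<noteq> 0" by simp
  show ?thesis unfolding fps_ln_deriv using inverse_mult_eq_1'[OF h] by simp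
qed

lemma ring_aux: "(x::'a::comm_ring_1) * (b * (c * d * l1) + db * l) = (x*db)*l + c*b*(x*d)*l1"
  by (simp add: algebra_simps)

lemma ring_aux2: "(fa * (b::'a::comm_ring_1)) * l + c*b*1*l1 = fa * (b * l) + c * (b * l1)"
  by (simp add: algebra_simps)

lemma ode_E: "(1 + fps_X) * fps_deriv (fps_binomial a * LL ^ k) =
   fps_const a * (fps_binomial a * LL ^ k) + fps_const (of_nat k) * (fps_binomial a * LL ^ (k - 1))"
proof -
  define B where "B = fps_binomial a"
  define DB where "DB = fps_deriv B"
  define DL where "DL = fps_deriv LL"
  define C where "C = (fps_const (of_nat k) :: real fps)"
  define X1 where "X1 = (1 + fps_X :: real fps)"
  have e: "fps_deriv (B * LL ^ k) = B * (C * DL * LL ^ (k - 1)) + DB * LL ^ k"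
    unfolding DB_def DL_def C_def by (simp only: fps_deriv_mult fps_deriv_power)
  have "X1 * fps_deriv (B * LL ^ k) =
     (X1 * DB) * LL ^ k + C * B * (X1 * DL) * LL ^ (k - 1)"
    unfolding e by (rule ring_aux)
  also have "\<dots> = fps_const a * (B * LL ^ k) + C * (B * LL ^ (k - 1))"
    unfolding DB_def DL_def B_def X1_def ode_B ode_L by (rule ring_aux2)
  finally show ?thesis unfolding B_def X1_def C_def .
qed

lemma t1:
  fixes F :: "real fps"
  shows "((1 + fps_X) * fps_deriv F) $ N = (of_nat N + 1) * F $ Suc N + of_nat N * F $ N"
proof -
  have "((1 + fps_X) * fps_deriv F) $ N = fps_deriv F $ N + (fps_X * fps_deriv F) $ N"
    by (simp only: distrib_right fps_add_nth mult_1_left)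
  also have "(fps_X * fps_deriv F) $ N = of_nat N * F $ N"
    by (cases N) (simp_all del: of_nat_Suc add: fps_deriv_nth)
  finally show ?thesis by (simp add: fps_deriv_nth algebra_simps)
qed

lemma ode_coeff_gen:
  fixes F G :: "real fps"
  assumes h: "(1 + fps_X) * fps_deriv F = fps_const a * F + fps_const c * G"
  shows "(of_nat N + 1) * F $ Suc N = (a - of_nat N) * F $ N + c * G $ N"
proof -
  have r: "((1 + fps_X) * fps_deriv F) $ N = a * F $ N + c * G $ N"
    unfolding h by (simp only: fps_add_nth fps_mult_left_const_nth)
  from t1[of F N] r show ?thesis by (simp add: algebra_simps)
qed

lemma ode_coeff: "(of_nat N + 1) * (fps_binomial a * LL ^ k) $ Suc N =
   (a - of_nat N) * (fps_binomial a * LL ^ k) $ N + of_nat k * (fps_binomial a * LL ^ (k - 1)) $ N"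
  by (rule ode_coeff_gen[OF ode_E])


lemma st_rec: "stirling1 (Suc N) m = (if m = 0 then 0 else stirling1 N (m - 1)) - of_nat N * stirling1 N m"
proof -
  define p where "p = (\<Prod>j<N. [:- real j, 1:])"
  have "(\<Prod>j<Suc N. [:- real j, 1:]) = p * [:- real N, 1:]" unfolding p_def by simp
  also have "\<dots> = smult (- real N) p + pCons 0 p" by (simp add: mult_pCons_right)
  finally have "stirling1 (Suc N) m = - real N * coeff p m + coeff (pCons 0 p) m"
    unfolding stirling1_def by simp
  then show ?thesis unfolding stirling1_def p_def[symmetric] by (cases m) auto
qed

lemma st_0: "stirling1 0 m = (if m = 0 then 1 else 0)"
  unfolding stirling1_def by (simp add: coeff_1)

lemma st_big: "N < m \<Longrightarrow> stirling1 N m = 0"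
proof (induction N arbitrary: m)
  case 0 then show ?case by (simp add: st_0)
next
  case (Suc N) then show ?case by (simp add: st_rec)
qed

lemma st_N0: "stirling1 (Suc N) 0 = 0"
proof (induction N)
  case 0 then show ?case by (simp add: st_rec st_0)
next
  case (Suc N) then show ?case by (simp add: st_rec)
qed

definition gg :: "real \<Rightarrow> nat \<Rightarrow> nat \<Rightarrow> real" where
  "gg a k N = (\<Sum>m\<le>N. stirling1 N m * of_nat (m choose k) * a ^ (m - k))"

lemma term_rec: "of_nat (Suc m choose k) * (a::real) ^ (Suc m - k) =
   a * (of_nat (m choose k) * a ^ (m - k)) + (if k = 0 then 0 else of_nat (m choose (k - 1)) * a ^ (m - (k - 1)))"
proof (cases k)
  case 0 then show ?thesis by simp
next
  case (Suc k')
  show ?thesis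
  proof (cases "k' < m")
    case True
    then have "Suc m - k = Suc (m - k)" "m - (k - 1) = Suc (m - k)" using Suc by auto
    then show ?thesis using Suc by (simp add: algebra_simps)
  next
    case False
    then have "m choose k = 0" using Suc by simp
    moreover have "Suc m - k = m - (k - 1)" using Suc by simp
    ultimately show ?thesis using Suc by simp
  qed
qed

lemma gg_rec: "gg a k (Suc N) = (a - of_nat N) * gg a k N + (if k = 0 then 0 else gg a (k - 1) N)"
proof -
  define h where "h m = of_nat (m choose k) * a ^ (m - k)" for m
  have A: "gg a k (Suc N) = (\<Sum>m\<le>Suc N. (if m = 0 then 0 else stirling1 N (m - 1)) * h m)
            - of_nat N * (\<Sum>m\<le>Suc N. stirling1 N m * h m)"
    unfolding gg_def h_def st_rec by (simp add: algebra_simps sum_subtractf sum_distrib_left)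
  have B: "(\<Sum>m\<le>Suc N. stirling1 N m * h m) = gg a k N"
    unfolding gg_def h_def by (simp add: st_big mult.assoc)
  have C: "(\<Sum>m\<le>Suc N. (if m = 0 then 0 else stirling1 N (m - 1)) * h m) = (\<Sum>m\<le>N. stirling1 N m * h (Suc m))"
    by (subst sum.atMost_Suc_shift) simp
  have D: "(\<Sum>m\<le>N. stirling1 N m * h (Suc m)) = a * gg a k N + (if k = 0 then 0 else gg a (k - 1) N)"
    unfolding h_def term_rec gg_def by (simp add: algebra_simps sum.distrib sum_distrib_left)
  show ?thesis unfolding A C D B by (simp add: algebra_simps)
qed

lemma LL_pow_0: "(LL ^ k) $ 0 = (if k = 0 then 1 else 0)"
  by (simp add: fps_power_zeroth)

lemma main_coeff: "fact N * (fps_binomial a * LL ^ k) $ N = fact k * gg a k N"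
proof (induction N arbitrary: k)
  case 0
  show ?case by (simp add: gg_def st_0 LL_pow_0)
next
  case (Suc N)
  have "fact (Suc N) * (fps_binomial a * LL ^ k) $ Suc N
      = fact N * ((of_nat N + 1) * (fps_binomial a * LL ^ k) $ Suc N)" by (simp add: algebra_simps)
  also have "\<dots> = (a - of_nat N) * (fact N * (fps_binomial a * LL ^ k) $ N)
       + of_nat k * (fact N * (fps_binomial a * LL ^ (k - 1)) $ N)"
    unfolding ode_coeff by (simp add: algebra_simps)
  also have "\<dots> = (a - of_nat N) * (fact k * gg a k N) + of_nat k * (fact (k - 1) * gg a (k - 1) N)"
    unfolding Suc.IH ..
  also have "\<dots> = fact k * gg a k (Suc N)"
  proof (cases k)
    case 0 then show ?thesis by (simp add: gg_rec)
  next
    case (Suc k') then show ?thesis by (simp add: gg_rec algebra_simps)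
  qed
  finally show ?case .
qed


lemma LL_pow_low: "j < k \<Longrightarrow> (LL ^ k) $ j = 0"
proof -
  assume jk: "j < k"
  from fps_X_dvd_fps_ln[of "1::real"] obtain G where G: "LL = fps_X * G" by (rule dvdE)
  have "LL ^ k = fps_X ^ k * G ^ k" unfolding G by (simp add: power_mult_distrib)
  then show ?thesis using jk by (simp add: fps_X_power_mult_nth)
qed

definition LS :: "real \<Rightarrow> (nat \<Rightarrow> real) \<Rightarrow> real fps" where
  "LS c Lv = Abs_fps (\<lambda>n. \<Sum>k\<le>n. Lv k / fact k * c ^ k * ((fps_ln 1) ^ k $ n))"

lemma LS_ext: "j \<le> N \<Longrightarrow> LS c Lv $ j = (\<Sum>k\<le>N. Lv k / fact k * c ^ k * ((LL ^ k) $ j))"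
  unfolding LS_def fps_nth_Abs_fps
  by (rule sum.mono_neutral_left) (auto simp: LL_pow_low)

lemma core: "(fps_binomial a * LS c Lv) $ N = (1 / fact N) * (\<Sum>k\<le>N. Lv k * c ^ k * gg a k N)"
proof -
  have "(fps_binomial a * LS c Lv) $ N = (\<Sum>i=0..N. fps_binomial a $ i * LS c Lv $ (N - i))"
    by (rule fps_mult_nth)
  also have "\<dots> = (\<Sum>i=0..N. fps_binomial a $ i * (\<Sum>k\<le>N. Lv k / fact k * c ^ k * ((LL ^ k) $ (N - i))))"
  proof (rule sum.cong)
    fix i assume "i \<in> {0..N}"
    show "fps_binomial a $ i * LS c Lv $ (N - i) = fps_binomial a $ i * (\<Sum>k\<le>N. Lv k / fact k * c ^ k * ((LL ^ k) $ (N - i)))"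
      by (simp only: LS_ext[of "N - i" N, OF diff_le_self])
  qed simp
  also have "\<dots> = (\<Sum>i=0..N. \<Sum>k\<le>N. fps_binomial a $ i * (Lv k / fact k * c ^ k * ((LL ^ k) $ (N - i))))"
    by (simp only: sum_distrib_left)
  also have "\<dots> = (\<Sum>k\<le>N. \<Sum>i=0..N. fps_binomial a $ i * (Lv k / fact k * c ^ k * ((LL ^ k) $ (N - i))))"
    by (rule sum.swap)
  also have "\<dots> = (\<Sum>k\<le>N. Lv k / fact k * c ^ k * (\<Sum>i=0..N. fps_binomial a $ i * (LL ^ k) $ (N - i)))"
    by (simp only: sum_distrib_left mult_ac)
  also have "\<dots> = (\<Sum>k\<le>N. Lv k / fact k * c ^ k * (fps_binomial a * LL ^ k) $ N)"
    by (simp add: fps_mult_nth)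
  also have "\<dots> = (\<Sum>k\<le>N. Lv k / fact k * c ^ k * (fact k * gg a k N / fact N))"
  proof (rule sum.cong)
    fix k assume "k \<in> {..N}"
    have "(fps_binomial a * LL ^ k) $ N = fact k * gg a k N / fact N"
      using main_coeff[of N a k] by (simp add: field_simps)
    then show "Lv k / fact k * c ^ k * (fps_binomial a * LL ^ k) $ N = Lv k / fact k * c ^ k * (fact k * gg a k N / fact N)"
      by simp
  qed simp
  also have "\<dots> = (1 / fact N) * (\<Sum>k\<le>N. Lv k * c ^ k * gg a k N)"
    by (simp add: sum_distrib_left mult.assoc)
  finally show ?thesis .
qed

lemma term2: "(a::real) \<noteq> 0 \<Longrightarrow> a ^ m * (of_nat (m choose k) * (c / a) ^ k) = of_nat (m choose k) * c ^ k * a ^ (m - k)"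
proof (cases "k \<le> m")
  case True
  assume a: "a \<noteq> 0"
  have "a ^ m = a ^ k * a ^ (m - k)" using True by (simp add: power_add[symmetric])
  then show ?thesis using a by (simp add: power_divide field_simps)
qed simp

lemma core2:
  assumes a: "(a::real) \<noteq> 0" and N: "1 \<le> N"
  shows "(\<Sum>k\<le>N. Lv k * c ^ k * gg a k N) =
    (\<Sum>m=1..N. stirling1 N m * a ^ m * (\<Sum>k=0..m. of_nat (m choose k) * (c / a) ^ k * Lv k))"
proof -
  have "(\<Sum>m=1..N. stirling1 N m * a ^ m * (\<Sum>k=0..m. of_nat (m choose k) * (c / a) ^ k * Lv k))
     = (\<Sum>m\<le>N. stirling1 N m * a ^ m * (\<Sum>k=0..m. of_nat (m choose k) * (c / a) ^ k * Lv k))"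
  proof (rule sum.mono_neutral_left)
    show "\<forall>i\<in>{..N} - {1..N}. stirling1 N i * a ^ i * (\<Sum>k = 0..i. of_nat (i choose k) * (c / a) ^ k * Lv k) = 0"
    proof
      fix i assume "i \<in> {..N} - {1..N}"
      then have "i = 0" by auto
      moreover have "stirling1 N 0 = 0" using N st_N0[of "N - 1"] by simp
      ultimately show "stirling1 N i * a ^ i * (\<Sum>k = 0..i. of_nat (i choose k) * (c / a) ^ k * Lv k) = 0" by simp
    qed
  qed auto
  also have "\<dots> = (\<Sum>m\<le>N. stirling1 N m * a ^ m * (\<Sum>k\<le>N. of_nat (m choose k) * (c / a) ^ k * Lv k))"
  proof (rule sum.cong)
    fix m assume m: "m \<in> {..N}"
    have "(\<Sum>k=0..m. of_nat (m choose k) * (c / a) ^ k * Lv k) = (\<Sum>k\<le>N. of_nat (m choose k) * (c / a) ^ k * Lv k)"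
      by (rule sum.mono_neutral_left) (use m in auto)
    then show "stirling1 N m * a ^ m * (\<Sum>k=0..m. of_nat (m choose k) * (c / a) ^ k * Lv k) = stirling1 N m * a ^ m * (\<Sum>k\<le>N. of_nat (m choose k) * (c / a) ^ k * Lv k)" by simp
  qed simp
  also have "\<dots> = (\<Sum>m\<le>N. \<Sum>k\<le>N. stirling1 N m * Lv k * (a ^ m * (of_nat (m choose k) * (c / a) ^ k)))"
    by (simp add: sum_distrib_left algebra_simps)
  also have "\<dots> = (\<Sum>m\<le>N. \<Sum>k\<le>N. stirling1 N m * Lv k * (of_nat (m choose k) * c ^ k * a ^ (m - k)))"
    by (simp only: term2[OF a])
  also have "\<dots> = (\<Sum>k\<le>N. \<Sum>m\<le>N. stirling1 N m * Lv k * (of_nat (m choose k) * c ^ k * a ^ (m - k)))"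
    by (rule sum.swap)
  also have "\<dots> = (\<Sum>k\<le>N. Lv k * c ^ k * gg a k N)"
    unfolding gg_def by (simp add: sum_distrib_left mult_ac)
  finally show ?thesis by simp
qed


lemma Lseries_LS: "Lseries p1 p2 p3 = LS (1 / (4 * real (p1 * p2 * p3))) (Lval p1 p2 p3)"
  unfolding Lseries_def LS_def ..

lemma LS_0: "LS c Lv $ 0 = Lv 0"
  unfolding LS_def by simp

lemma B_ne0: "fps_binomial (b::real) * fps_X \<noteq> 0"
proof -
  have "fps_binomial b \<noteq> 0" by (metis fps_binomial_nth gbinomial_0(1) fps_zero_nth zero_neq_one)
  then show ?thesis by simp
qed

lemma B_inv: "fps_binomial (- a) * fps_binomial (a::real) = 1"
  by (simp flip: fps_binomial_add_mult)

lemma Lambda_eq: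
  assumes a: "(2 - phi p1 p2 p3) \<noteq> 0"
  shows "Lambda n p1 p2 p3 = 1/2 * ((fps_binomial ((2 - phi p1 p2 p3) / 4) * LS (1 / (4 * real (p1 * p2 * p3))) (Lval p1 p2 p3)) $ Suc n)"
proof -
  define a where "a = (2 - phi p1 p2 p3) / 4"
  define c where "c = 1 / (4 * real (p1 * p2 * p3))"
  have a0: "a \<noteq> 0" using a unfolding a_def by simp
  have ca: "1 / (real (p1 * p2 * p3) * (2 - phi p1 p2 p3)) = c / a"
    unfolding a_def c_def by (simp add: field_simps)
  have "(fps_binomial a * LS c (Lval p1 p2 p3)) $ Suc n =
     (1 / fact (Suc n)) * (\<Sum>m=1..Suc n. stirling1 (Suc n) m * a ^ m * (\<Sum>k=0..m. of_nat (m choose k) * (c / a) ^ k * Lval p1 p2 p3 k))"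
    unfolding core by (subst core2[OF a0]) simp_all
  then show ?thesis unfolding Lambda_def Let_def ca a_def[symmetric] c_def[symmetric] by simp
qed

lemma tau_gen:
  assumes L0: "Lval p1 p2 p3 0 = 0" and phi2: "phi p1 p2 p3 \<noteq> 2"
  shows "tau_infty p1 p2 p3 $ n = Lambda n p1 p2 p3"
proof -
  define a where "a = (2 - phi p1 p2 p3) / 4"
  define c where "c = 1 / (4 * real (p1 * p2 * p3))"
  define F where "F = fps_binomial a * LS c (Lval p1 p2 p3)"
  define t0 where "t0 = Abs_fps (\<lambda>n. 1/2 * F $ Suc n)"
  have F0: "F $ 0 = 0" unfolding F_def by (simp add: fps_mult_nth LS_0 L0)
  have Xt: "fps_X * t0 = fps_const (1/2) * F"
  proof (rule fps_ext)
    fix n show "(fps_X * t0) $ n = (fps_const (1/2) * F) $ n"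
      using F0 by (cases n) (simp_all add: t0_def)
  qed
  have ba: "phi p1 p2 p3 / 4 - 1/2 = - a" unfolding a_def by (simp add: field_simps)
  have eq: "fps_binomial (phi p1 p2 p3 / 4 - 1/2) * fps_X * t0 = fps_const (1/2) * Lseries p1 p2 p3"
  proof -
    have "fps_binomial (phi p1 p2 p3 / 4 - 1/2) * fps_X * t0 = fps_const (1/2) * ((fps_binomial (- a) * fps_binomial a) * LS c (Lval p1 p2 p3))"
      unfolding ba mult.assoc Xt F_def by (simp only: mult_ac)
    then show ?thesis unfolding B_inv Lseries_LS c_def by simp
  qed
  have "tau_infty p1 p2 p3 = t0"
    unfolding tau_infty_def
  proof (rule the_equality)
    fix \<tau> assume "fps_binomial (phi p1 p2 p3 / 4 - 1 / 2) * fps_X * \<tau> = fps_const (1 / 2) * Lseries p1 p2 p3"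
    with eq have "fps_binomial (phi p1 p2 p3 / 4 - 1 / 2) * fps_X * \<tau> = fps_binomial (phi p1 p2 p3 / 4 - 1 / 2) * fps_X * t0" by simp
    then show "\<tau> = t0" using B_ne0 by simp
  qed (rule eq)
  moreover have "2 - phi p1 p2 p3 \<noteq> 0" using phi2 by simp
  ultimately show ?thesis using Lambda_eq[of p1 p2 p3 n] unfolding t0_def F_def a_def c_def by simp
qed

lemma gb_m1: "((-1::real) gchoose k) = (-1) ^ k"
  using gbinomial_minus[of "1::real" k] by (simp add: binomial_gbinomial[symmetric])

lemma tau_poinc:
  assumes L0: "Lval 2 3 5 0 = -2" and ph: "phi 2 3 5 = 181/30"
  shows "tau_infty_poincare $ n = Lambda n 2 3 5 + (-1) ^ (n + 1)"
proof -
  define a where "a = (2 - phi 2 3 5) / 4"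
  define c where "c = 1 / (4 * real ((2::nat) * 3 * 5))"
  define F where "F = fps_binomial a * LS c (Lval 2 3 5)"
  define G where "G = fps_binomial (-1) + fps_const (1/2) * F"
  define t0 where "t0 = Abs_fps (\<lambda>n. G $ Suc n)"
  have a: "a = - (121/120)" unfolding a_def ph by simp
  have F0: "F $ 0 = -2" unfolding F_def by (simp add: fps_mult_nth LS_0 L0)
  have G0: "G $ 0 = 0" unfolding G_def using F0 by simp
  have Xt: "fps_X * t0 = G"
  proof (rule fps_ext)
    fix n show "(fps_X * t0) $ n = G $ n"
      using G0 by (cases n) (simp_all add: t0_def)
  qed
  have eq: "fps_binomial (121/120) * fps_X * t0 = fps_binomial (1/120) + fps_const (1/2) * Lseries 2 3 5"
  proof -
    have "fps_binomial (121/120) * fps_X * t0 = fps_binomial (121/120) * fps_binomial (-1) + fps_const (1/2) * ((fps_binomial (- a) * fps_binomial a) * LS c (Lval 2 3 5))"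
      unfolding mult.assoc Xt G_def F_def a by (simp add: algebra_simps)
    also have "fps_binomial (121/120) * fps_binomial (-1) = fps_binomial (1/120 :: real)"
      by (simp flip: fps_binomial_add_mult)
    finally show ?thesis unfolding B_inv Lseries_LS c_def by simp
  qed
  have tt: "tau_infty_poincare = t0"
    unfolding tau_infty_poincare_def
  proof (rule the_equality)
    fix \<tau> assume "fps_binomial (121/120) * fps_X * \<tau> = fps_binomial (1/120) + fps_const (1/2) * Lseries 2 3 5"
    with eq have "fps_binomial (121/120) * fps_X * \<tau> = fps_binomial (121/120) * fps_X * t0" by simp
    then show "\<tau> = t0" using B_ne0 by simp
  qed (rule eq)
  have "tau_infty_poincare $ n = G $ Suc n" unfolding tt t0_def by (simp only: fps_nth_Abs_fps)
  also have "\<dots> = (-1) ^ Suc n + 1/2 * F $ Suc n" unfolding G_def by (simp add: gb_m1)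
  also have "1/2 * F $ Suc n = Lambda n 2 3 5"
    using Lambda_eq[of 2 3 5 n] ph unfolding F_def a_def[symmetric] c_def by simp
  finally show ?thesis by simp
qed



lemma sawtooth_nat:
  assumes a: "0 < a" and nd: "\<not> a dvd m"
  shows "sawtooth (real m / real a) = real (m mod a) / real a - 1/2"
proof -
  have fl: "\<lfloor>real m / real a\<rfloor> = int (m div a)" by (simp add: floor_divide_of_nat_eq)
  have "real m = real (a * (m div a) + m mod a)" by (simp only: mult_div_mod_eq)
  then have md: "real m = real a * real (m div a) + real (m mod a)" by (simp only: of_nat_add of_nat_mult)
  have ni: "real m / real a \<notin> \<int>"
  proof
    assume "real m / real a \<in> \<int>"
    then obtain z where z: "real m / real a = of_int z" by (auto elim: Ints_cases)
    then have "z = int (m div a)" using fl by simp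
    then have "real m / real a = real (m div a)" using z by simp
    then have "real m = real a * real (m div a)" using a by (simp add: field_simps)
    then have "real m = real (a * (m div a))" by simp
    then have "m = a * (m div a)" by (simp only: of_nat_eq_iff)
    then have "a dvd m" by (rule dvdI)
    then show False using nd by simp
  qed
  have "sawtooth (real m / real a) = real m / real a - real (m div a) - 1/2"
    unfolding sawtooth_def using ni fl by simp
  also have "\<dots> = real (m mod a) / real a - 1/2" using a md by (simp add: field_simps)
  finally show ?thesis .
qed

lemma perm_mod:
  fixes a b :: nat
  assumes a: "0 < a" and cop: "coprime a b"
  shows "(\<lambda>k. k * b mod a) ` {1..a-1} = {1..a-1}" and "inj_on (\<lambda>k. k * b mod a) {1..a-1}"
proof -
  show inj: "inj_on (\<lambda>k. k * b mod a) {1..a-1}"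
  proof (rule inj_onI)
    fix x y assume x: "x \<in> {1..a-1}" and y: "y \<in> {1..a-1}" and e: "x * b mod a = y * b mod a"
    have "int (x * b) mod int a = int (y * b) mod int a" using e by (simp only: zmod_int[symmetric])
    then have "int a dvd int (x * b) - int (y * b)" by (simp only: mod_eq_dvd_iff)
    moreover have "int (x * b) - int (y * b) = (int x - int y) * int b" by (simp add: algebra_simps)
    ultimately have "int a dvd (int x - int y) * int b" by simp
    moreover have "coprime (int a) (int b)" using cop by simp
    ultimately have d: "int a dvd (int x - int y)" using coprime_dvd_mult_left_iff by blast
    have "\<bar>int x - int y\<bar> < int a" using x y by auto
    have "int x - int y = 0"
    proof (rule ccontr)
      assume "int x - int y \<noteq> 0"
      then have "\<bar>int a\<bar> \<le> \<bar>int x - int y\<bar>" using dvd_imp_le_int d by blast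
      then show False using \<open>\<bar>int x - int y\<bar> < int a\<close> by simp
    qed
    then show "x = y" by simp
  qed
  have sub: "(\<lambda>k. k * b mod a) ` {1..a-1} \<subseteq> {1..a-1}"
  proof
    fix z assume "z \<in> (\<lambda>k. k * b mod a) ` {1..a-1}"
    then obtain k where k: "k \<in> {1..a-1}" and z: "z = k * b mod a" by auto
    have "\<not> a dvd k * b"
    proof
      assume "a dvd k * b"
      then have "a dvd k" using cop coprime_dvd_mult_left_iff by blast
      then show False using k by (auto dest: dvd_imp_le)
    qed
    then have "z \<noteq> 0" using z by (simp add: dvd_eq_mod_eq_0)
    moreover have "z < a" using z a by simp
    ultimately show "z \<in> {1..a-1}" by auto
  qed
  show "(\<lambda>k. k * b mod a) ` {1..a-1} = {1..a-1}"
    by (rule endo_inj_surj[OF _ sub inj]) simp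
qed

lemma sum_perm_mod:
  fixes a b :: nat
  assumes a: "0 < a" and cop: "coprime a b"
  shows "(\<Sum>k=1..a-1. f (k * b mod a)) = (\<Sum>k=1..a-1. f k)"
proof -
  have "(\<Sum>k=1..a-1. f (k * b mod a)) = sum f ((\<lambda>k. k * b mod a) ` {1..a-1})"
    using sum.reindex[OF perm_mod(2)[OF a cop], of f] by (simp add: comp_def)
  then show ?thesis using perm_mod(1)[OF a cop] by simp
qed

lemma sum_sq: "6 * (\<Sum>k<n. (real k)^2) = real n * (real n - 1) * (2 * real n - 1)"
  by (induction n) (simp_all add: algebra_simps power2_eq_square)

lemma sum_lin: "2 * (\<Sum>k<n. real k) = real n * (real n - 1)"
  by (induction n) (simp_all add: algebra_simps)

lemma sum_1a: "0 < a \<Longrightarrow> (\<Sum>k=1..a-1. f k) = (\<Sum>k<a. f k) - f 0" for f :: "nat \<Rightarrow> real"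
proof (cases a)
  case 0 then show "0 < a \<Longrightarrow> ?thesis" by simp
next
  case (Suc n)
  have "{..<a} = insert 0 {1..a-1}" using Suc by auto
  then show ?thesis by simp
qed


lemma ded:
  fixes a b :: nat
  assumes a: "0 < a" and cop: "coprime a b"
  shows "\<exists>I M :: int. 12 * real a * dedekind_sum b a = of_int I \<and>
           int b * I = (int b ^ 2 + 1) * (int a - 1) * (2 * int a - 1) + int a * M"
proof -
  define K where "K = {1..a-1}"
  define r where "r k = k * b mod a" for k
  define q where "q k = k * b div a" for k
  define S1 where "S1 = (\<Sum>k\<in>K. real k)"
  define S2 where "S2 = (\<Sum>k\<in>K. (real k)^2)"
  define T where "T = (\<Sum>k\<in>K. real k * real (r k))"
  define Qi where "Qi = (\<Sum>k\<in>K. int k * int (q k))"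
  define Q2i where "Q2i = (\<Sum>k\<in>K. (int (q k))^2)"
  define A where "A = real a"
  define B where "B = real b"
  define Q where "Q = real_of_int Qi"
  define Q2 where "Q2 = real_of_int Q2i"
  have A0: "A > 0" using a unfolding A_def by simp
  have cardK: "real (card K) = A - 1" unfolding K_def A_def using a by simp
  have rq: "real (r k) = real k * B - A * real (q k)" for k
  proof -
    have "k * b = a * q k + r k" unfolding q_def r_def by simp
    then have "real (k * b) = real (a * q k + r k)" by (simp only:)
    then show ?thesis unfolding A_def B_def by simp
  qed
  have saw1: "sawtooth (real k / real a) = real k / A - 1/2" if "k \<in> K" for k
  proof -
    have "\<not> a dvd k" using that unfolding K_def by (auto dest: dvd_imp_le)
    moreover have "k mod a = k" using that a unfolding K_def by auto
    ultimately show ?thesis using sawtooth_nat[OF a, of k] unfolding A_def by simp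
  qed
  have saw2: "sawtooth (real k * real b / real a) = real (r k) / A - 1/2" if "k \<in> K" for k
  proof -
    have "\<not> a dvd k * b"
    proof
      assume "a dvd k * b"
      then have "a dvd k" using cop coprime_dvd_mult_left_iff by blast
      then show False using that unfolding K_def by (auto dest: dvd_imp_le)
    qed
    then show ?thesis using sawtooth_nat[OF a, of "k * b"] unfolding A_def r_def by simp
  qed
  have s_eq: "dedekind_sum b a = (\<Sum>k\<in>K. (real k / A - 1/2) * (real (r k) / A - 1/2))"
    unfolding dedekind_sum_def K_def[symmetric] by (rule sum.cong) (simp_all add: saw1 saw2)
  have R1: "(\<Sum>k\<in>K. real (r k)) = S1"
    unfolding S1_def K_def r_def using sum_perm_mod[OF a cop, of real] by simp
  have R2: "(\<Sum>k\<in>K. (real (r k))^2) = S2"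
    unfolding S2_def K_def r_def using sum_perm_mod[OF a cop, of "\<lambda>x. (real x)^2"] by simp
  have S1v: "2 * S1 = A * (A - 1)"
    unfolding S1_def K_def A_def using sum_1a[OF a, of real] sum_lin[of a] by simp
  have S2v: "6 * S2 = A * (A - 1) * (2 * A - 1)"
    unfolding S2_def K_def A_def using sum_1a[OF a, of "\<lambda>k. (real k)^2"] sum_sq[of a] by simp
  have E1: "4 * A^2 * dedekind_sum b a = 4 * T - 2 * A * S1 - 2 * A * S1 + A^2 * (A - 1)"
  proof -
    have "4 * A^2 * dedekind_sum b a = (\<Sum>k\<in>K. 4 * real k * real (r k) - 2 * A * real k - 2 * A * real (r k) + A^2)"
      unfolding s_eq sum_distrib_left
      by (rule sum.cong) (use A0 in \<open>simp_all add: field_simps power2_eq_square\<close>)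
    also have "\<dots> = 4 * T - 2 * A * S1 - 2 * A * (\<Sum>k\<in>K. real (r k)) + A^2 * real (card K)"
      unfolding T_def S1_def by (simp add: sum.distrib sum_subtractf sum_distrib_left mult.assoc)
    finally show ?thesis unfolding R1 cardK .
  qed
  have E2: "T = B * S2 - A * Q"
    unfolding T_def S2_def Q_def Qi_def rq
    by (simp add: sum_subtractf sum_distrib_left algebra_simps power2_eq_square)
  have E3: "S2 = B^2 * S2 - 2 * A * B * Q + A^2 * Q2"
  proof -
    have "S2 = (\<Sum>k\<in>K. (real k * B - A * real (q k))^2)" using R2 unfolding rq by simp
    also have "\<dots> = B^2 * S2 - 2 * A * B * Q + A^2 * Q2"
      unfolding S2_def Q_def Qi_def Q2_def Q2i_def
      by (simp add: power2_eq_square sum_subtractf sum.distrib sum_distrib_left algebra_simps)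
    finally show ?thesis .
  qed
  define I where "I = 2 * int b * (int a - 1) * (2 * int a - 1) - 12 * Qi - 3 * int a * (int a - 1)"
  define M where "M = - 6 * Q2i - 3 * int b * (int a - 1)"
  have "12 * A * dedekind_sum b a = 2 * B * (A - 1) * (2 * A - 1) - 12 * Q - 3 * A * (A - 1)"
  proof -
    have "A * (12 * A * dedekind_sum b a) = 3 * (4 * A^2 * dedekind_sum b a)" by (simp add: power2_eq_square)
    also have "\<dots> = 12 * T - 6 * A * (2 * S1) + 3 * A^2 * (A - 1)" unfolding E1 by (simp add: algebra_simps)
    also have "\<dots> = 2 * B * (6 * S2) - 12 * A * Q - 6 * A * (2 * S1) + 3 * A^2 * (A - 1)" unfolding E2 by (simp add: algebra_simps)
    also have "\<dots> = A * (2 * B * (A - 1) * (2 * A - 1) - 12 * Q - 3 * A * (A - 1))"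
      unfolding S1v S2v by (simp add: algebra_simps power2_eq_square)
    finally show ?thesis using A0 by simp
  qed
  then have I: "12 * real a * dedekind_sum b a = of_int I" unfolding I_def A_def B_def Q_def by simp
  have "B * (12 * Q) = (B^2 - 1) * (A - 1) * (2 * A - 1) + 6 * A * Q2"
  proof -
    have "A * (B * (12 * Q)) = 6 * (2 * A * B * Q)" by simp
    also have "2 * A * B * Q = (B^2 - 1) * S2 + A^2 * Q2" using E3 by (simp add: algebra_simps)
    also have "6 * ((B^2 - 1) * S2 + A^2 * Q2) = (B^2 - 1) * (6 * S2) + 6 * A^2 * Q2" by (simp add: algebra_simps)
    also have "\<dots> = A * ((B^2 - 1) * (A - 1) * (2 * A - 1) + 6 * A * Q2)" unfolding S2v by (simp add: algebra_simps power2_eq_square)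
    finally show ?thesis using A0 by simp
  qed
  note BQ = this
  have IM: "real_of_int I = 2 * B * (A - 1) * (2 * A - 1) - 12 * Q - 3 * A * (A - 1)"
           "real_of_int M = - 6 * Q2 - 3 * B * (A - 1)"
    unfolding I_def M_def A_def B_def Q_def Q2_def by simp_all
  have "B * real_of_int I = 2 * B^2 * (A - 1) * (2 * A - 1) - B * (12 * Q) - 3 * A * B * (A - 1)"
    unfolding IM by (simp add: algebra_simps power2_eq_square)
  also have "\<dots> = (B^2 + 1) * (A - 1) * (2 * A - 1) + A * real_of_int M"
    unfolding BQ IM by (simp add: algebra_simps power2_eq_square)
  finally have "B * real_of_int I = (B^2 + 1) * (A - 1) * (2 * A - 1) + A * real_of_int M" .
  then have "real_of_int (int b * I) = real_of_int ((int b ^ 2 + 1) * (int a - 1) * (2 * int a - 1) + int a * M)"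
    unfolding A_def B_def by simp
  then have "int b * I = (int b ^ 2 + 1) * (int a - 1) * (2 * int a - 1) + int a * M"
    by (simp only: of_int_eq_iff)
  with I show ?thesis by blast
qed


lemma phi_ne2:
  fixes p1 p2 p3 :: nat
  assumes p1: "2 \<le> p1" and p2: "0 < p2" and p3: "0 < p3"
    and c12: "coprime p1 p2" and c13: "coprime p1 p3" and c23: "coprime p2 p3"
  shows "phi p1 p2 p3 \<noteq> 2"
proof
  assume ph: "phi p1 p2 p3 = 2"
  have cA: "coprime p1 (p2 * p3)" using c12 c13 by simp
  have cB: "coprime p2 (p1 * p3)" using c12 c23 by (simp add: coprime_commute)
  have cC: "coprime p3 (p1 * p2)" using c13 c23 by (simp add: coprime_commute)
  obtain I1 M1 where h1: "12 * real p1 * dedekind_sum (p2 * p3) p1 = of_int I1"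
     and h1': "int (p2 * p3) * I1 = (int (p2 * p3) ^ 2 + 1) * (int p1 - 1) * (2 * int p1 - 1) + int p1 * M1"
    using ded[OF _ cA] p1 by auto
  obtain I2 where h2: "12 * real p2 * dedekind_sum (p1 * p3) p2 = of_int I2"
    using ded[OF p2 cB] by auto
  obtain I3 where h3: "12 * real p3 * dedekind_sum (p1 * p2) p3 = of_int I3"
    using ded[OF p3 cC] by auto
  define P where "P = real (p1 * p2 * p3)"
  have "0 < p1 * p2 * p3" using p1 p2 p3 by simp
  then have P0: "P > 0" unfolding P_def by (simp only: of_nat_0_less_iff)
  have "P * phi p1 p2 p3 = 3 * P - 1 + real (p2 * p3) * (12 * real p1 * dedekind_sum (p2 * p3) p1)
      + real (p1 * p3) * (12 * real p2 * dedekind_sum (p1 * p3) p2)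
      + real (p1 * p2) * (12 * real p3 * dedekind_sum (p1 * p2) p3)"
    unfolding phi_def Let_def P_def[symmetric] using P0 p1 p2 p3 by (simp add: P_def field_simps)
  then have "2 * P = 3 * P - 1 + real (p2 * p3) * of_int I1 + real (p1 * p3) * of_int I2 + real (p1 * p2) * of_int I3"
    unfolding h1 h2 h3 ph by simp
  then have "real_of_int (int (p1 * p2 * p3) - 1 + int (p2 * p3) * I1 + int (p1 * p3) * I2 + int (p1 * p2) * I3) = 0"
    unfolding P_def by simp
  then have e: "int (p1 * p2 * p3) - 1 + int (p2 * p3) * I1 + int (p1 * p3) * I2 + int (p1 * p2) * I3 = 0"
    by (simp only: of_int_eq_0_iff)
  define b where "b = int (p2 * p3)"
  define X where "X = b + (b^2 + 1) * (2 * int p1 - 3) + M1 + int p3 * I2 + int p2 * I3"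
  have "b^2 + int p1 * X = 0"
  proof -
    have "b^2 + int p1 * X = int (p1 * p2 * p3) - 1 + (b^2 + 1) * (int p1 - 1) * (2 * int p1 - 1) + int p1 * M1 + int (p1 * p3) * I2 + int (p1 * p2) * I3"
      unfolding X_def b_def by (simp add: algebra_simps power2_eq_square)
    also have "\<dots> = 0" using e h1' unfolding b_def by simp
    finally show ?thesis .
  qed
  then have "int p1 dvd b^2" by (metis dvd_minus_iff dvd_triv_left add_eq_0_iff2 minus_equation_iff)
  moreover have "coprime (int p1) (b^2)" using cA unfolding b_def by simp
  ultimately have "is_unit (int p1)" using coprime_common_divisor[of "int p1" "b^2" "int p1"] by simp
  then have "int p1 dvd 1" by simp
  then have "int p1 \<le> 1" by (rule zdvd_imp_le) simp
  then show False using p1 by simp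
qed


definition EE :: "(int \<times> int \<times> int) set" where
  "EE = {(1,1,1),(1,1,-1),(1,-1,1),(1,-1,-1),(-1,1,1),(-1,1,-1),(-1,-1,1),(-1,-1,-1)}"

definition Rv :: "nat \<Rightarrow> nat \<Rightarrow> nat \<Rightarrow> int \<times> int \<times> int \<Rightarrow> int" where
  "Rv p1 p2 p3 e = int (p1*p2*p3) + fst e * int (p2*p3) + fst (snd e) * int (p1*p3) + snd (snd e) * int (p1*p2)"

definition vv :: "nat \<Rightarrow> nat \<Rightarrow> nat \<Rightarrow> int \<times> int \<times> int \<Rightarrow> int" where
  "vv p1 p2 p3 e = Rv p1 p2 p3 e mod int (2*p1*p2*p3)"

definition sg :: "int \<times> int \<times> int \<Rightarrow> real" where
  "sg e = - of_int (fst e * fst (snd e) * snd (snd e))"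

lemma memE: "(x, y, z) \<in> EE \<longleftrightarrow> x \<in> {1, -1} \<and> y \<in> {1, -1} \<and> z \<in> {1, -1}"
  unfolding EE_def by auto

lemma finE: "finite EE" unfolding EE_def by simp

lemma sumE: "(\<Sum>e\<in>EE. f e) = f (1,1,1) + f (1,1,-1) + f (1,-1,1) + f (1,-1,-1) + f (-1,1,1) + f (-1,1,-1) + f (-1,-1,1) + f (-1,-1,-1)"
  unfolding EE_def by (simp add: algebra_simps)

lemma chi_cond_iff: "chi_cond p1 p2 p3 x y z n \<longleftrightarrow> (x, y, z) \<in> EE \<and> n mod int (2*p1*p2*p3) = vv p1 p2 p3 (x, y, z)"
  unfolding chi_cond_def memE vv_def Rv_def by simp

lemma chi_formula:
  assumes inj: "inj_on (vv p1 p2 p3) EE" and nz: "\<forall>e\<in>EE. vv p1 p2 p3 e \<noteq> 0"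
    and N: "0 < 2*p1*p2*p3" and j: "j \<in> {1..2*p1*p2*p3}"
  shows "chi p1 p2 p3 (int j) = (\<Sum>e\<in>EE. sg e * (if int j = vv p1 p2 p3 e then 1 else 0))"
proof -
  define N where "N = 2*p1*p2*p3"
  have vr: "0 \<le> vv p1 p2 p3 e \<and> vv p1 p2 p3 e < int N" for e
    unfolding vv_def N_def using N by simp
  have modiff: "int j mod int N = vv p1 p2 p3 e \<longleftrightarrow> int j = vv p1 p2 p3 e" if "e \<in> EE" for e
  proof (cases "j < N")
    case True then show ?thesis by simp
  next
    case False
    then have "j = N" using j unfolding N_def by simp
    then show ?thesis using nz that vr[of e] by auto
  qed
  have cc: "chi_cond p1 p2 p3 x y z (int j) \<longleftrightarrow> (x, y, z) \<in> EE \<and> int j = vv p1 p2 p3 (x, y, z)" for x y z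
    unfolding chi_cond_iff N_def[symmetric] using modiff by blast
  show ?thesis
  proof (cases "\<exists>e\<in>EE. int j = vv p1 p2 p3 e")
    case True
    then obtain e0 where e0: "e0 \<in> EE" "int j = vv p1 p2 p3 e0" by blast
    have uniq: "e \<in> EE \<Longrightarrow> int j = vv p1 p2 p3 e \<longleftrightarrow> e = e0" for e
      using inj e0 by (auto dest: inj_onD)
    have "(\<Sum>e\<in>EE. sg e * (if int j = vv p1 p2 p3 e then 1 else 0)) = (\<Sum>e\<in>EE. if e = e0 then sg e else 0)"
      by (rule sum.cong) (simp_all add: uniq)
    also have "\<dots> = sg e0" using e0 finE by simp
    finally have S: "(\<Sum>e\<in>EE. sg e * (if int j = vv p1 p2 p3 e then 1 else 0)) = sg e0" .
    obtain x0 y0 z0 where ex: "e0 = (x0, y0, z0)" by (cases e0) auto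
    have xyz: "x0 \<in> {1,-1}" "y0 \<in> {1,-1}" "z0 \<in> {1,-1}" using e0(1) unfolding ex memE by auto
    have cc0: "chi_cond p1 p2 p3 x y z (int j) \<longleftrightarrow> (x, y, z) = (x0, y0, z0)" for x y z
      using cc uniq ex e0 by blast
    show ?thesis
    proof (cases "x0 * y0 * z0 = -1")
      case True
      then have "chi p1 p2 p3 (int j) = 1" unfolding chi_def using cc0 by auto
      then show ?thesis using S True unfolding ex sg_def by simp
    next
      case False
      then have "x0 * y0 * z0 = 1" using xyz by auto
      then have "chi p1 p2 p3 (int j) = -1" unfolding chi_def using cc0 False by auto
      then show ?thesis using S \<open>x0 * y0 * z0 = 1\<close> unfolding ex sg_def by simp
    qed
  next
    case False
    then have "\<not> chi_cond p1 p2 p3 x y z (int j)" for x y z using cc by blast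
    then have "chi p1 p2 p3 (int j) = 0" unfolding chi_def by auto
    moreover have "(\<Sum>e\<in>EE. sg e * (if int j = vv p1 p2 p3 e then 1 else 0)) = 0"
      using False by (intro sum.neutral) auto
    ultimately show ?thesis by simp
  qed
qed

lemma chi_sum:
  assumes inj: "inj_on (vv p1 p2 p3) EE" and nz: "\<forall>e\<in>EE. vv p1 p2 p3 e \<noteq> 0"
    and N: "0 < 2*p1*p2*p3"
  shows "(\<Sum>j=1..2*p1*p2*p3. chi p1 p2 p3 (int j) * g j) = (\<Sum>e\<in>EE. sg e * g (nat (vv p1 p2 p3 e)))"
proof -
  define N where "N = 2*p1*p2*p3"
  have vr: "0 \<le> vv p1 p2 p3 e \<and> vv p1 p2 p3 e < int N" for e
    unfolding vv_def N_def using N by simp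
  have "(\<Sum>j=1..N. chi p1 p2 p3 (int j) * g j) = (\<Sum>j=1..N. \<Sum>e\<in>EE. sg e * (if int j = vv p1 p2 p3 e then g j else 0))"
  proof (rule sum.cong)
    fix j assume "j \<in> {1..N}"
    then show "chi p1 p2 p3 (int j) * g j = (\<Sum>e\<in>EE. sg e * (if int j = vv p1 p2 p3 e then g j else 0))"
      unfolding chi_formula[OF inj nz N \<open>j \<in> {1..N}\<close>[unfolded N_def]] sum_distrib_right
      by (intro sum.cong) auto
  qed simp
  also have "\<dots> = (\<Sum>e\<in>EE. \<Sum>j=1..N. sg e * (if int j = vv p1 p2 p3 e then g j else 0))"
    by (rule sum.swap)
  also have "\<dots> = (\<Sum>e\<in>EE. sg e * g (nat (vv p1 p2 p3 e)))"
  proof (rule sum.cong)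
    fix e assume e: "e \<in> EE"
    have nn: "nat (vv p1 p2 p3 e) \<in> {1..N}" using vr[of e] nz e by auto
    have "(\<Sum>j=1..N. sg e * (if int j = vv p1 p2 p3 e then g j else 0)) = (\<Sum>j=1..N. if j = nat (vv p1 p2 p3 e) then sg e * g j else 0)"
      by (rule sum.cong) (use vr[of e] in auto)
    also have "\<dots> = sg e * g (nat (vv p1 p2 p3 e))" using nn by simp
    finally show "(\<Sum>j=1..N. sg e * (if int j = vv p1 p2 p3 e then g j else 0)) = sg e * g (nat (vv p1 p2 p3 e))" .
  qed simp
  finally show ?thesis unfolding N_def .
qed


lemma h_zero:
  fixes p X :: nat and h :: int
  assumes p: "2 \<le> p" and c: "coprime p X" and h: "h \<in> {-1, 0, 1}" and d: "int p dvd h * int X"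
  shows "h = 0"
proof (rule ccontr)
  assume h0: "h \<noteq> 0"
  have "coprime (int p) (int X)" using c by simp
  then have "int p dvd h" using d coprime_dvd_mult_left_iff by blast
  then have "\<bar>int p\<bar> \<le> \<bar>h\<bar>" using dvd_imp_le_int h0 by blast
  then show False using p h by auto
qed

lemma inj_R:
  fixes p1 p2 p3 :: nat
  assumes p1: "2 \<le> p1" and p2: "2 \<le> p2" and p3: "2 \<le> p3"
    and c12: "coprime p1 p2" and c13: "coprime p1 p3" and c23: "coprime p2 p3"
  shows "inj_on (Rv p1 p2 p3) EE"
proof (rule inj_onI)
  fix e e' assume e: "e \<in> EE" and e': "e' \<in> EE" and eq: "Rv p1 p2 p3 e = Rv p1 p2 p3 e'"
  obtain x y z where ex: "e = (x, y, z)" by (cases e) auto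
  obtain x' y' z' where ex': "e' = (x', y', z')" by (cases e') auto
  have m: "x \<in> {1,-1}" "y \<in> {1,-1}" "z \<in> {1,-1}" "x' \<in> {1,-1}" "y' \<in> {1,-1}" "z' \<in> {1,-1}"
    using e e' unfolding ex ex' memE by auto
  define hx where "hx = (if x = x' then 0 else x)"
  define hy where "hy = (if y = y' then 0 else y)"
  define hz where "hz = (if z = z' then 0 else z)"
  have hd: "x - x' = 2 * hx" "y - y' = 2 * hy" "z - z' = 2 * hz"
    using m unfolding hx_def hy_def hz_def by auto
  have hm: "hx \<in> {-1,0,1}" "hy \<in> {-1,0,1}" "hz \<in> {-1,0,1}"
    using m unfolding hx_def hy_def hz_def by auto
  have "(x - x') * int (p2*p3) + (y - y') * int (p1*p3) + (z - z') * int (p1*p2) = 0"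
    using eq unfolding Rv_def ex ex' by (simp add: algebra_simps)
  then have "2 * (hx * int (p2*p3) + hy * int (p1*p3) + hz * int (p1*p2)) = 0"
    unfolding hd by (simp add: algebra_simps)
  then have L: "hx * int (p2*p3) + hy * int (p1*p3) + hz * int (p1*p2) = 0" by simp
  have "hx * int (p2*p3) = int p1 * (- (hy * int p3 + hz * int p2))" using L by (simp add: algebra_simps)
  then have "int p1 dvd hx * int (p2*p3)" by (metis dvd_triv_left)
  moreover have "coprime p1 (p2*p3)" using c12 c13 by (simp add: coprime_commute)
  ultimately have hx0: "hx = 0" using h_zero[OF p1 _ hm(1)] by blast
  have "hy * int (p1*p3) = int p2 * (- (hx * int p3 + hz * int p1))" using L by (simp add: algebra_simps)
  then have "int p2 dvd hy * int (p1*p3)" by (metis dvd_triv_left)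
  moreover have "coprime p2 (p1*p3)" using c12 c23 by (simp add: coprime_commute)
  ultimately have hy0: "hy = 0" using h_zero[OF p2 _ hm(2)] by blast
  have "hz * int (p1*p2) = int p3 * (- (hx * int p2 + hy * int p1))" using L by (simp add: algebra_simps)
  then have "int p3 dvd hz * int (p1*p2)" by (metis dvd_triv_left)
  moreover have "coprime p3 (p1*p2)" using c13 c23 by (simp add: coprime_commute)
  ultimately have hz0: "hz = 0" using h_zero[OF p3 _ hm(3)] by blast
  have "x = x'" "y = y'" "z = z'" using hx0 hy0 hz0 m unfolding hx_def hy_def hz_def by (auto split: if_splits)
  then show "e = e'" unfolding ex ex' by simp
qed

lemma bn0: "bernoulli_num 0 = 1" by (simp add: bernoulli_num.simps[of 0])
lemma bn1: "bernoulli_num 1 = -1/2" by (simp add: bernoulli_num.simps[of 1] bn0)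

lemma bp1: "bernoulli_poly 1 x = x - 1/2"
  unfolding bernoulli_poly_def by (simp add: bn0 bn1)

lemma bp1': "bernoulli_poly (Suc 0) x = x - 1/2" using bp1 by simp

lemma L0_general:
  fixes p1 p2 p3 :: nat
  assumes p1: "2 \<le> p1" and p2: "2 \<le> p2" and p3: "2 \<le> p3"
    and c12: "coprime p1 p2" and c13: "coprime p1 p3" and c23: "coprime p2 p3"
    and lt: "p2*p3 + p1*p3 + p1*p2 < p1*p2*p3"
  shows "Lval p1 p2 p3 0 = 0"
proof -
  define N where "N = 2*p1*p2*p3"
  have N0: "0 < 2*p1*p2*p3" using p1 p2 p3 by simp
  have rng: "0 < Rv p1 p2 p3 e \<and> Rv p1 p2 p3 e < int (2*p1*p2*p3)" if "e \<in> EE" for e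
  proof -
    obtain x y z where ex: "e = (x, y, z)" by (cases e) auto
    have m: "x \<in> {1,-1}" "y \<in> {1,-1}" "z \<in> {1,-1}" using that unfolding ex memE by auto
    have lt': "int (p2*p3) + int (p1*p3) + int (p1*p2) < int (p1*p2*p3)" using lt by linarith
    have bnd: "- u \<le> w * u \<and> w * u \<le> u" if "w \<in> {1,-1}" "0 \<le> u" for w u :: int
      using that by auto
    have "- int (p2*p3) \<le> x * int (p2*p3) \<and> x * int (p2*p3) \<le> int (p2*p3)" using bnd m(1) by simp
    moreover have "- int (p1*p3) \<le> y * int (p1*p3) \<and> y * int (p1*p3) \<le> int (p1*p3)" using bnd m(2) by simp
    moreover have "- int (p1*p2) \<le> z * int (p1*p2) \<and> z * int (p1*p2) \<le> int (p1*p2)" using bnd m(3) by simp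
    ultimately show ?thesis unfolding Rv_def ex fst_conv snd_conv using lt' by linarith
  qed
  have vR: "vv p1 p2 p3 e = Rv p1 p2 p3 e" if "e \<in> EE" for e
    unfolding vv_def using rng[OF that] by simp
  have inj: "inj_on (vv p1 p2 p3) EE"
    using inj_R[OF p1 p2 p3 c12 c13 c23] by (simp add: inj_on_def vR)
  have nz: "\<forall>e\<in>EE. vv p1 p2 p3 e \<noteq> 0"
  proof
    fix e assume e: "e \<in> EE"
    show "vv p1 p2 p3 e \<noteq> 0" using rng[OF e] vR[OF e] by simp
  qed
  have "Lval p1 p2 p3 0 = - (\<Sum>j=1..N. chi p1 p2 p3 (int j) * bernoulli_poly 1 (real j / real N))"
    unfolding Lval_def Let_def N_def by simp
  also have "\<dots> = - (\<Sum>e\<in>EE. sg e * bernoulli_poly 1 (real (nat (vv p1 p2 p3 e)) / real N))"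
    unfolding N_def using chi_sum[OF inj nz N0, of "\<lambda>j. bernoulli_poly 1 (real j / real (2*p1*p2*p3))"] by simp
  also have "\<dots> = - (\<Sum>e\<in>EE. sg e * (real_of_int (Rv p1 p2 p3 e) / real N - 1/2))"
  proof -
    have "sg e * bernoulli_poly 1 (real (nat (vv p1 p2 p3 e)) / real N) = sg e * (real_of_int (Rv p1 p2 p3 e) / real N - 1/2)"
      if "e \<in> EE" for e using vR[OF that] rng[OF that] by (simp add: bp1 bp1')
    then show ?thesis by (intro arg_cong[where f = uminus] sum.cong) simp_all
  qed
  also have "\<dots> = 0"
  proof -
    have "real N > 0" unfolding N_def using N0 by (simp only: of_nat_0_less_iff)
    then show ?thesis unfolding sumE sg_def Rv_def by (simp add: field_simps)
  qed
  finally show ?thesis .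
qed


lemma ded_explicit:
  fixes a b :: nat
  assumes a: "0 < a" and cop: "coprime a b"
  shows "dedekind_sum b a = (\<Sum>k=1..a-1. (real k / real a - 1/2) * (real (k * b mod a) / real a - 1/2))"
  unfolding dedekind_sum_def
proof (rule sum.cong)
  fix k assume k: "k \<in> {1..a-1}"
  have "\<not> a dvd k" using k by (auto dest: dvd_imp_le)
  moreover have "k mod a = k" using k a by auto
  ultimately have s1: "sawtooth (real k / real a) = real k / real a - 1/2" using sawtooth_nat[OF a, of k] by simp
  have "\<not> a dvd k * b"
  proof
    assume "a dvd k * b"
    then have "a dvd k" using cop coprime_dvd_mult_left_iff by blast
    then show False using k by (auto dest: dvd_imp_le)
  qed
  then have s2: "sawtooth (real k * real b / real a) = real (k * b mod a) / real a - 1/2"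
    using sawtooth_nat[OF a, of "k * b"] by simp
  show "sawtooth (real k / real a) * sawtooth (real k * real b / real a) = (real k / real a - 1/2) * (real (k * b mod a) / real a - 1/2)"
    unfolding s1 s2 ..
qed simp

lemma phi_235: "phi 2 3 5 = 181/30"
proof -
  have "dedekind_sum 15 2 = 0"
    by (subst ded_explicit) simp_all
  moreover have "dedekind_sum 10 3 = 1/18"
  proof -
    have "{1..3-1} = {1,2::nat}" by auto
    then show ?thesis by (subst ded_explicit) (simp_all add: coprime_iff_gcd_eq_1 gcd_non_0_nat)
  qed
  moreover have "dedekind_sum 6 5 = 1/5"
  proof -
    have "{1..5-1} = {1,2,3,4::nat}" by auto
    then show ?thesis by (subst ded_explicit) (simp_all add: coprime_iff_gcd_eq_1 gcd_non_0_nat)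
  qed
  ultimately show ?thesis unfolding phi_def Let_def by simp
qed

lemma L0_235: "Lval 2 3 5 0 = -2"
proof -
  have inj: "inj_on (vv 2 3 5) EE"
    unfolding inj_on_def EE_def vv_def Rv_def by simp
  have nz: "\<forall>e\<in>EE. vv 2 3 5 e \<noteq> 0"
    unfolding EE_def vv_def Rv_def by simp
  have N0: "0 < 2 * 2 * 3 * (5::nat)" by simp
  have "Lval 2 3 5 0 = - (\<Sum>j=1..2*2*3*5. chi 2 3 5 (int j) * bernoulli_poly 1 (real j / real (2*2*3*5::nat)))"
    unfolding Lval_def Let_def by simp
  also have "\<dots> = - (\<Sum>e\<in>EE. sg e * bernoulli_poly 1 (real (nat (vv 2 3 5 e)) / real (2*2*3*5::nat)))"
    using chi_sum[OF inj nz N0, of "\<lambda>j. bernoulli_poly 1 (real j / real (2*2*3*5::nat))"] by simp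
  also have "\<dots> = -2"
    unfolding sumE sg_def vv_def Rv_def bp1 by simp
  finally show ?thesis .
qed


lemma ge2:
  fixes p1 p2 p3 :: nat
  assumes "0 < p1" "0 < p2" "0 < p3" "1 / real p1 + 1 / real p2 + 1 / real p3 < 1"
  shows "2 \<le> p1"
proof (rule ccontr)
  assume "\<not> 2 \<le> p1"
  then have "p1 = 1" using assms(1) by simp
  then have "1 / real p1 = 1" by simp
  moreover have "0 < 1 / real p2" "0 < 1 / real p3" using assms(2,3) by simp_all
  ultimately show False using assms(4) by linarith
qed

lemma lt_nat:
  fixes p1 p2 p3 :: nat
  assumes "0 < p1" "0 < p2" "0 < p3" "1 / real p1 + 1 / real p2 + 1 / real p3 < 1"
  shows "p2*p3 + p1*p3 + p1*p2 < p1*p2*p3"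
proof -
  have "real p2 * real p3 + real p1 * real p3 + real p1 * real p2 < real p1 * real p2 * real p3"
    using assms by (simp add: field_simps)
  then have "real (p2*p3 + p1*p3 + p1*p2) < real (p1*p2*p3)" by simp
  then show ?thesis by (simp only: of_nat_less_iff)
qed

theorem mainTheorem6:
  shows "(\<forall>p1 p2 p3 :: nat. 0 < p1 \<and> 0 < p2 \<and> 0 < p3 \<and>
            coprime p1 p2 \<and> coprime p1 p3 \<and> coprime p2 p3 \<and>
            1 / real p1 + 1 / real p2 + 1 / real p3 < 1 \<longrightarrow>
            (\<forall>n. tau_infty p1 p2 p3 $ n = Lambda n p1 p2 p3))
       \<and> (\<forall>n. tau_infty_poincare $ n = Lambda n 2 3 5 + (-1) ^ (n + 1))"
proof
  show "\<forall>p1 p2 p3 :: nat. 0 < p1 \<and> 0 < p2 \<and> 0 < p3 \<and>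
            coprime p1 p2 \<and> coprime p1 p3 \<and> coprime p2 p3 \<and>
            1 / real p1 + 1 / real p2 + 1 / real p3 < 1 \<longrightarrow>
            (\<forall>n. tau_infty p1 p2 p3 $ n = Lambda n p1 p2 p3)"
  proof (intro allI impI)
    fix p1 p2 p3 n :: nat
    assume h: "0 < p1 \<and> 0 < p2 \<and> 0 < p3 \<and> coprime p1 p2 \<and> coprime p1 p3 \<and> coprime p2 p3 \<and>
            1 / real p1 + 1 / real p2 + 1 / real p3 < 1"
    then have pos: "0 < p1" "0 < p2" "0 < p3" and c: "coprime p1 p2" "coprime p1 p3" "coprime p2 p3"
      and s: "1 / real p1 + 1 / real p2 + 1 / real p3 < 1" by auto
    have s2: "1 / real p2 + 1 / real p1 + 1 / real p3 < 1" using s by simp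
    have s3: "1 / real p3 + 1 / real p1 + 1 / real p2 < 1" using s by simp
    have g1: "2 \<le> p1" by (rule ge2[OF pos s])
    have g2: "2 \<le> p2" by (rule ge2[OF pos(2) pos(1) pos(3) s2])
    have g3: "2 \<le> p3" by (rule ge2[OF pos(3) pos(1) pos(2) s3])
    have lt: "p2*p3 + p1*p3 + p1*p2 < p1*p2*p3" by (rule lt_nat[OF pos s])
    show "tau_infty p1 p2 p3 $ n = Lambda n p1 p2 p3"
      by (rule tau_gen[OF L0_general[OF g1 g2 g3 c lt] phi_ne2[OF g1 pos(2,3) c]])
  qed
next
  show "\<forall>n. tau_infty_poincare $ n = Lambda n 2 3 5 + (-1) ^ (n + 1)"
    using tau_poinc[OF L0_235 phi_235] by blast
qed

end
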